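(* Let $M$ be a modular-magic Sudoku board. For each $j\in\{0,3,6\}$, consider the three blocks of $M$ whose center entry is $j$. Then among the three off-diagonal sets of these three blocks, at least two are equal.
   Context: A Sudoku board is a $9\times 9$ array with entries from $\{0,1,\dots,8\}$ such that every row, every column, and every one of the nine $3\times 3$ blocks (rows $3a+1,\dots,3a+3$, columns $3b+1,\dots,3b+3$, $a,b\in\{0,1,2\}$) contains each symbol exactly once. Within a block, a mini-row, mini-column, or mini-diagonal is a row, column, or one of the two diagonals of that $3\times 3$ block. A modular-magic Sudoku board is a Sudoku board in which, for every block, the sum of the entries of each mini-row, each mini-column and each of the two mini-diagonals is divisible by $9$. In every block of a modular-magic board, one of the two mini-diagonals has entry set $\{0,3,6\}$, and for each $j\in\{0,3,6\}$ exactly three blocks have center entry $j$. The off-diagonal set of a block is the set of the two corner entries of the mini-diagonal whose entries are not from $\{0,3,6\}$. *)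

theory Defs
  imports Main
begin

type_synonym board = "nat \<Rightarrow> nat \<Rightarrow> nat"

definition blk :: "board \<Rightarrow> nat \<Rightarrow> nat \<Rightarrow> nat \<Rightarrow> nat \<Rightarrow> nat" where
  "blk M a b i j = M (3*a + i) (3*b + j)"

definition sudoku :: "board \<Rightarrow> bool" where
  "sudoku M \<longleftrightarrow>
     (\<forall>r<9. bij_betw (\<lambda>c. M r c) {..<9} {..<9}) \<and>
     (\<forall>c<9. bij_betw (\<lambda>r. M r c) {..<9} {..<9}) \<and>
     (\<forall>a<3. \<forall>b<3. bij_betw (\<lambda>(i,j). blk M a b i j) ({..<3} \<times> {..<3}) {..<9})"

definition modular_magic :: "board \<Rightarrow> bool" where
  "modular_magic M \<longleftrightarrow> sudoku M \<and>
     (\<forall>a<3. \<forall>b<3.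
        (\<forall>i<3. 9 dvd (blk M a b i 0 + blk M a b i 1 + blk M a b i 2)) \<and>
        (\<forall>j<3. 9 dvd (blk M a b 0 j + blk M a b 1 j + blk M a b 2 j)) \<and>
        9 dvd (blk M a b 0 0 + blk M a b 1 1 + blk M a b 2 2) \<and>
        9 dvd (blk M a b 0 2 + blk M a b 1 1 + blk M a b 2 0))"

definition center :: "board \<Rightarrow> nat \<Rightarrow> nat \<Rightarrow> nat" where
  "center M a b = blk M a b 1 1"

definition off_diag :: "board \<Rightarrow> nat \<Rightarrow> nat \<Rightarrow> nat set" where
  "off_diag M a b =
     (if {blk M a b 0 0, blk M a b 1 1, blk M a b 2 2} = {0,3,6}
      then {blk M a b 0 2, blk M a b 2 0}
      else {blk M a b 0 0, blk M a b 2 2})"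

end

theory Submission
  imports Defs
begin

definition pt :: "nat \<Rightarrow> nat \<Rightarrow> nat" where
  "pt c x = (if c = 0 then (9 - x) mod 9 else if c = 3 then (15 - x) mod 9 else (12 - x) mod 9)"

definition tidx :: "nat \<Rightarrow> nat \<Rightarrow> nat" where
  "tidx c x = (if c = 0 then (if x = 1 \<or> x = 8 then 1 else if x = 2 \<or> x = 7 then 2 else 3)
     else if c = 3 then (if x = 2 \<or> x = 4 then 1 else if x = 1 \<or> x = 5 then 2 else 3)
     else (if x = 5 \<or> x = 7 then 1 else if x = 4 \<or> x = 8 then 2 else 3))"

definition m9 :: "nat \<Rightarrow> nat" where "m9 s = (9 - s mod 9) mod 9"

definition goodG :: "nat \<Rightarrow> nat \<Rightarrow> nat \<Rightarrow> nat \<Rightarrow> nat \<Rightarrow> nat \<Rightarrow> nat \<Rightarrow> nat \<Rightarrow> nat \<Rightarrow> bool" where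
 "goodG a b c d e f g h i = (e \<in> {0,3,6} \<and> d \<notin> {0,3,6} \<and> b \<notin> {0,3,6} \<and> d < 9 \<and> b < 9
   \<and> f = pt e d \<and> h = pt e b
   \<and> (if {a,e,i} = {0,3,6} then {c,g} else {a,i}) = {(if a \<in> {0,3,6} then c else a), pt e (if a \<in> {0,3,6} then c else a)}
   \<and> (if a \<in> {0,3,6} then c else a) \<notin> {0,3,6} \<and> (if a \<in> {0,3,6} then c else a) < 9
   \<and> tidx e d \<noteq> tidx e b
   \<and> tidx e (if a \<in> {0,3,6} then c else a) \<noteq> tidx e d
   \<and> tidx e (if a \<in> {0,3,6} then c else a) \<noteq> tidx e b
   \<and> tidx e d \<in> {1,2,3} \<and> tidx e b \<in> {1,2,3}
   \<and> tidx e (if a \<in> {0,3,6} then c else a) \<in> {1,2,3})"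

definition chk :: "nat \<Rightarrow> nat \<Rightarrow> nat \<Rightarrow> nat \<Rightarrow> bool" where
 "chk e a b d = (let c = m9 (a+b); f = m9 (d+e); g = m9 (a+d); h = m9 (b+e); i = m9 (a+e) in
   (distinct [a,b,c,d,e,f,g,h,i] \<and> 9 dvd (g+h+i) \<and> 9 dvd (c+f+i) \<and> 9 dvd (c+e+g)) \<longrightarrow>
   goodG a b c d e f g h i)"

lemma chk_all: "list_all (\<lambda>e. list_all (\<lambda>a. list_all (\<lambda>b. list_all (\<lambda>d. chk e a b d) [0..<9]) [0..<9]) [0..<9]) [0,3,6]"
  by code_simp


lemma lt9_cases: "(x::nat) < 9 \<Longrightarrow> (x = 0 \<Longrightarrow> P) \<Longrightarrow> (x = 1 \<Longrightarrow> P) \<Longrightarrow> (x = 2 \<Longrightarrow> P) \<Longrightarrow>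
  (x = 3 \<Longrightarrow> P) \<Longrightarrow> (x = 4 \<Longrightarrow> P) \<Longrightarrow> (x = 5 \<Longrightarrow> P) \<Longrightarrow> (x = 6 \<Longrightarrow> P) \<Longrightarrow>
  (x = 7 \<Longrightarrow> P) \<Longrightarrow> (x = 8 \<Longrightarrow> P) \<Longrightarrow> P"
  by (simp add: numeral_eq_Suc less_Suc_eq; blast)

lemma disjE3: "A \<or> B \<or> C \<Longrightarrow> (A \<Longrightarrow> P) \<Longrightarrow> (B \<Longrightarrow> P) \<Longrightarrow> (C \<Longrightarrow> P) \<Longrightarrow> P" by blast

lemma F2:
  assumes "c \<in> {0,3,6::nat}" "c' \<in> {0,3,6}" "c \<noteq> c'" "x < 9" "x' < 9" "x \<notin> {0,3,6}" "x' \<notin> {0,3,6}"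
    "x \<noteq> x'" "x \<noteq> pt c' x'" "pt c x \<noteq> x'" "pt c x \<noteq> pt c' x'"
  shows "tidx c x = tidx c' x'"
  using assms
  apply -
  apply (rule disjE3[of "c=0" "c=3" "c=6"], simp; rule disjE3[of "c'=0" "c'=3" "c'=6"], simp;
     rule lt9_cases[OF assms(4)]; rule lt9_cases[OF assms(5)]; simp add: pt_def tidx_def)
  done

lemma F3:
  assumes "c \<in> {0,3,6::nat}" "y < 9" "y' < 9" "y \<notin> {0,3,6}" "y' \<notin> {0,3,6}" "tidx c y = tidx c y'"
  shows "{y, pt c y} = {y', pt c y'}"
  using assms
  apply -
  apply (rule disjE3[of "c=0" "c=3" "c=6"], simp;
     rule lt9_cases[OF assms(2)]; rule lt9_cases[OF assms(3)]; simp add: pt_def tidx_def insert_commute)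
  done

definition phchk :: bool where
  "phchk = list_all (\<lambda>t0. list_all (\<lambda>t1. list_all (\<lambda>t2. list_all (\<lambda>v0. list_all (\<lambda>v1. list_all (\<lambda>v2.
     (t0 \<noteq> v0 \<and> t0 \<noteq> v1 \<and> t0 \<noteq> v2 \<and> t1 \<noteq> v0 \<and> t1 \<noteq> v1 \<and> t1 \<noteq> v2 \<and> t2 \<noteq> v0 \<and> t2 \<noteq> v1 \<and> t2 \<noteq> v2)
     \<longrightarrow> (6 - t0 - v0 = 6 - t1 - v1 \<or> 6 - t0 - v0 = 6 - t2 - v2 \<or> 6 - t1 - v1 = 6 - t2 - v2))
     [1,2,3::nat]) [1,2,3]) [1,2,3]) [1,2,3]) [1,2,3]) [1,2,3]"

lemma phchk: phchk
  unfolding phchk_def by code_simp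

lemma kthird: "(t::nat) \<in> {1,2,3} \<Longrightarrow> v \<in> {1,2,3} \<Longrightarrow> k \<in> {1,2,3} \<Longrightarrow> k \<noteq> t \<Longrightarrow> k \<noteq> v \<Longrightarrow> t \<noteq> v \<Longrightarrow> k = 6 - t - v"
  by auto

lemma PH:
  fixes t0 t1 t2 v0 v1 v2 k0 k1 k2 :: nat
  assumes "t0 \<in> {1,2,3}" "t1 \<in> {1,2,3}" "t2 \<in> {1,2,3}" "v0 \<in> {1,2,3}" "v1 \<in> {1,2,3}" "v2 \<in> {1,2,3}"
    "k0 \<in> {1,2,3}" "k1 \<in> {1,2,3}" "k2 \<in> {1,2,3}"
    "t0 \<noteq> v0" "t0 \<noteq> v1" "t0 \<noteq> v2" "t1 \<noteq> v0" "t1 \<noteq> v1" "t1 \<noteq> v2" "t2 \<noteq> v0" "t2 \<noteq> v1" "t2 \<noteq> v2"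
    "k0 \<noteq> t0" "k0 \<noteq> v0" "k1 \<noteq> t1" "k1 \<noteq> v1" "k2 \<noteq> t2" "k2 \<noteq> v2"
  shows "k0 = k1 \<or> k0 = k2 \<or> k1 = k2"
proof -
  have k: "k0 = 6 - t0 - v0" "k1 = 6 - t1 - v1" "k2 = 6 - t2 - v2"
    using kthird assms by blast+
  have S: "\<forall>t0\<in>set [1,2,3]. \<forall>t1\<in>set [1,2,3]. \<forall>t2\<in>set [1,2,3]. \<forall>v0\<in>set [1,2,3]. \<forall>v1\<in>set [1,2,3]. \<forall>v2\<in>set [1,2,3::nat].
     (t0 \<noteq> v0 \<and> t0 \<noteq> v1 \<and> t0 \<noteq> v2 \<and> t1 \<noteq> v0 \<and> t1 \<noteq> v1 \<and> t1 \<noteq> v2 \<and> t2 \<noteq> v0 \<and> t2 \<noteq> v1 \<and> t2 \<noteq> v2)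
     \<longrightarrow> (6 - t0 - v0 = 6 - t1 - v1 \<or> 6 - t0 - v0 = 6 - t2 - v2 \<or> 6 - t1 - v1 = 6 - t2 - v2)"
    using phchk unfolding phchk_def by (simp only: list_all_iff)
  have m: "t0 \<in> set [1,2,3]" "t1 \<in> set [1,2,3]" "t2 \<in> set [1,2,3]" "v0 \<in> set [1,2,3]" "v1 \<in> set [1,2,3]" "v2 \<in> set [1,2,3]"
    using assms(1-6) by simp_all
  have "(6 - t0 - v0 = 6 - t1 - v1 \<or> 6 - t0 - v0 = 6 - t2 - v2 \<or> 6 - t1 - v1 = 6 - t2 - v2)"
    using bspec[OF bspec[OF bspec[OF bspec[OF bspec[OF bspec[OF S m(1)] m(2)] m(3)] m(4)] m(5)] m(6)] assms(10-18)
    by blast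
  then show ?thesis unfolding k .
qed

lemma aux9: "(m::nat) < 9 \<Longrightarrow> x < 9 \<Longrightarrow> (m + x) mod 9 = 0 \<Longrightarrow> x = (9 - m) mod 9"
  by (erule lt9_cases; erule lt9_cases; simp)

lemma solve9: "(x::nat) < 9 \<Longrightarrow> 9 dvd (s + x) \<Longrightarrow> x = m9 s"
proof -
  assume a: "x < 9" "9 dvd (s + x)"
  have "(s mod 9 + x) mod 9 = 0" using a(2) by (simp add: dvd_eq_mod_eq_0 mod_add_left_eq)
  then show ?thesis unfolding m9_def using aux9[of "s mod 9" x] a(1) by simp
qed

lemma three: "(x::nat) \<in> {0,3,6} \<Longrightarrow> y \<in> {0,3,6} \<Longrightarrow> z \<in> {0,3,6} \<Longrightarrow> x \<noteq> y \<Longrightarrow> x \<noteq> z \<Longrightarrow> y \<noteq> z \<Longrightarrow> {x,y,z} = {0,3,6}"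
  by auto

lemma block:
  fixes a b c d e f g h i :: nat
  assumes r: "a < 9" "b < 9" "c < 9" "d < 9" "e < 9" "f < 9" "g < 9" "h < 9" "i < 9"
  and dist: "distinct [a,b,c,d,e,f,g,h,i]"
  and l: "9 dvd (a+b+c)" "9 dvd (d+e+f)" "9 dvd (g+h+i)"
   "9 dvd (a+d+g)" "9 dvd (b+e+h)" "9 dvd (c+f+i)" "9 dvd (a+e+i)" "9 dvd (c+e+g)"
  shows "goodG a b c d e f g h i"
proof -
  have c: "c = m9 (a+b)" using solve9[OF r(3), of "a+b"] l(1) by (simp add: add.assoc)
  have f: "f = m9 (d+e)" using solve9[OF r(6), of "d+e"] l(2) by (simp add: add.assoc)
  have g: "g = m9 (a+d)" using solve9[OF r(7), of "a+d"] l(4) by (simp add: add.assoc)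
  have h: "h = m9 (b+e)" using solve9[OF r(8), of "b+e"] l(5) by (simp add: add.assoc)
  have i: "i = m9 (a+e)" using solve9[OF r(9), of "a+e"] l(7) by (simp add: add.assoc)
  have S: "set [a,b,c,d,e,f,g,h,i] = {..<9}"
  proof (rule card_subset_eq)
    show "set [a,b,c,d,e,f,g,h,i] \<subseteq> {..<9}" using r by auto
    show "card (set [a,b,c,d,e,f,g,h,i]) = card {..<9::nat}"
      using distinct_card[OF dist] by simp
  qed simp
  have "sum_list [a,b,c,d,e,f,g,h,i] = sum id {..<9::nat}"
    using sum_list_distinct_conv_sum_set[OF dist, of id] S by simp
  also have "\<dots> = 36" by (simp add: numeral_eq_Suc)
  finally have tot: "a+b+c+d+e+f+g+h+i = 36" by simp
  have "9 dvd ((d+e+f)+(b+e+h)+(a+e+i)+(c+e+g))" using l by simp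
  moreover have "(d+e+f)+(b+e+h)+(a+e+i)+(c+e+g) = 36 + 3*e" using tot by simp
  ultimately have d36: "9 dvd (36 + 3*e)" by simp
  have E: "e = 0 \<or> e = 3 \<or> e = 6" using r(5) d36 by (erule_tac lt9_cases) (simp_all add: dvd_eq_mod_eq_0)
  have A: "\<forall>e\<in>set [0,3,6]. \<forall>a\<in>{0..<9}. \<forall>b\<in>{0..<9}. \<forall>d\<in>{0..<9}. chk e a b d"
    using chk_all by (simp only: list_all_iff set_upt)
  have e1: "e \<in> set [0,3,6]" using E by auto
  have a1: "a \<in> {0..<9}" "b \<in> {0..<9}" "d \<in> {0..<9}" using r by auto
  have ch: "chk e a b d" using bspec[OF bspec[OF bspec[OF bspec[OF A e1] a1(1)] a1(2)] a1(3)] .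
  have imp: "(distinct [a,b,c,d,e,f,g,h,i] \<and> 9 dvd (g+h+i) \<and> 9 dvd (c+f+i) \<and> 9 dvd (c+e+g)) \<longrightarrow>
    goodG a b c d e f g h i"
    using ch by (simp only: chk_def Let_def c[symmetric] f[symmetric] g[symmetric]
        h[symmetric] i[symmetric])
  show ?thesis
    by (rule mp[OF imp]) (intro conjI dist l(3) l(6) l(8))
qed

definition yv :: "board \<Rightarrow> nat \<Rightarrow> nat \<Rightarrow> nat" where
  "yv M r s = (if blk M r s 0 0 \<in> {0,3,6} then blk M r s 0 2 else blk M r s 0 0)"

lemma bf0:
  assumes mm: "modular_magic M" and rs: "r < 3" "s < 3"
  shows "center M r s \<in> {0,3,6} \<and> blk M r s 1 0 \<notin> {0,3,6} \<and> blk M r s 0 1 \<notin> {0,3,6}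
   \<and> blk M r s 1 0 < 9 \<and> blk M r s 0 1 < 9
   \<and> blk M r s 1 2 = pt (center M r s) (blk M r s 1 0)
   \<and> blk M r s 2 1 = pt (center M r s) (blk M r s 0 1)
   \<and> off_diag M r s = {yv M r s, pt (center M r s) (yv M r s)} \<and> yv M r s \<notin> {0,3,6} \<and> yv M r s < 9
   \<and> tidx (center M r s) (blk M r s 1 0) \<noteq> tidx (center M r s) (blk M r s 0 1)
   \<and> tidx (center M r s) (yv M r s) \<noteq> tidx (center M r s) (blk M r s 1 0)
   \<and> tidx (center M r s) (yv M r s) \<noteq> tidx (center M r s) (blk M r s 0 1)
   \<and> tidx (center M r s) (blk M r s 1 0) \<in> {1,2,3}
   \<and> tidx (center M r s) (blk M r s 0 1) \<in> {1,2,3}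
   \<and> tidx (center M r s) (yv M r s) \<in> {1,2,3}"
proof -
  let ?F = "\<lambda>(i,j). blk M r s i j"
  have bij: "bij_betw ?F ({..<3} \<times> {..<3}) {..<9}"
    using mm rs unfolding modular_magic_def sudoku_def by blast
  have inj: "inj_on ?F ({..<3} \<times> {..<3})" using bij by (rule bij_betw_imp_inj_on)
  have img: "?F ` ({..<3} \<times> {..<3}) = {..<9}" using bij by (rule bij_betw_imp_surj_on)
  have lt: "blk M r s i j < 9" if "i < 3" "j < 3" for i j
  proof -
    have "?F (i,j) \<in> {..<9}" using img that by blast
    then show ?thesis by simp
  qed
  let ?L = "[(0,0),(0,1),(0,2),(1,0),(1,1),(1,2),(2,0),(2,1),(2,2)] :: (nat \<times> nat) list"
  have "distinct (map ?F ?L)"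
    by (rule distinct_map[THEN iffD2], rule conjI, simp, rule inj_on_subset[OF inj]) auto
  then have dist: "distinct [blk M r s 0 0, blk M r s 0 1, blk M r s 0 2, blk M r s 1 0, blk M r s 1 1,
     blk M r s 1 2, blk M r s 2 0, blk M r s 2 1, blk M r s 2 2]" by simp
  have mg: "(\<forall>i<3. 9 dvd (blk M r s i 0 + blk M r s i 1 + blk M r s i 2)) \<and>
        (\<forall>j<3. 9 dvd (blk M r s 0 j + blk M r s 1 j + blk M r s 2 j)) \<and>
        9 dvd (blk M r s 0 0 + blk M r s 1 1 + blk M r s 2 2) \<and>
        9 dvd (blk M r s 0 2 + blk M r s 1 1 + blk M r s 2 0)"
    using mm rs unfolding modular_magic_def by blast
  obtain a b c d e f g h i where
    ab: "a = blk M r s 0 0" "b = blk M r s 0 1" "c = blk M r s 0 2"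
        "d = blk M r s 1 0" "e = blk M r s 1 1" "f = blk M r s 1 2"
        "g = blk M r s 2 0" "h = blk M r s 2 1" "i = blk M r s 2 2" by blast
  have ltx: "a < 9" "b < 9" "c < 9" "d < 9" "e < 9" "f < 9" "g < 9" "h < 9" "i < 9"
    unfolding ab by (simp_all add: lt)
  have dx: "distinct [a,b,c,d,e,f,g,h,i]" using dist unfolding ab .
  have lx: "9 dvd (a+b+c)" "9 dvd (d+e+f)" "9 dvd (g+h+i)"
   "9 dvd (a+d+g)" "9 dvd (b+e+h)" "9 dvd (c+f+i)" "9 dvd (a+e+i)" "9 dvd (c+e+g)"
    unfolding ab using mg by auto
  have G: "goodG a b c d e f g h i" by (rule block[OF ltx dx lx])
  have cen: "center M r s = e" unfolding center_def ab ..
  have yy: "yv M r s = (if a \<in> {0,3,6} then c else a)" unfolding yv_def ab ..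
  have od: "off_diag M r s = (if {a,e,i} = {0,3,6} then {c,g} else {a,i})" unfolding off_diag_def ab ..
  show ?thesis
    using G unfolding goodG_def cen yy od ab[symmetric] .
qed

lemma bf:
  assumes mm: "modular_magic M" and rs: "r < 3" "s < 3"
  shows "center M r s \<in> {0,3,6}"
    and "blk M r s 1 0 \<notin> {0,3,6}"
    and "blk M r s 0 1 \<notin> {0,3,6}"
    and "blk M r s 1 0 < 9"
    and "blk M r s 0 1 < 9"
    and "blk M r s 1 2 = pt (center M r s) (blk M r s 1 0)"
    and "blk M r s 2 1 = pt (center M r s) (blk M r s 0 1)"
    and "off_diag M r s = {yv M r s, pt (center M r s) (yv M r s)}"
    and "yv M r s \<notin> {0,3,6}"
    and "yv M r s < 9"
    and "tidx (center M r s) (blk M r s 1 0) \<noteq> tidx (center M r s) (blk M r s 0 1)"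
    and "tidx (center M r s) (yv M r s) \<noteq> tidx (center M r s) (blk M r s 1 0)"
    and "tidx (center M r s) (yv M r s) \<noteq> tidx (center M r s) (blk M r s 0 1)"
    and "tidx (center M r s) (blk M r s 1 0) \<in> {1,2,3}"
    and "tidx (center M r s) (blk M r s 0 1) \<in> {1,2,3}"
    and "tidx (center M r s) (yv M r s) \<in> {1,2,3}"
  using bf0[OF mm rs] apply -
  apply (elim conjE, assumption)+
  done

lemma pick3: "(x::nat) \<in> {0,3,6} \<Longrightarrow> y \<in> {0,3,6} \<Longrightarrow> z \<in> {0,3,6} \<Longrightarrow> x \<noteq> y \<Longrightarrow> x \<noteq> z \<Longrightarrow> y \<noteq> z
  \<Longrightarrow> j \<in> {0,3,6} \<Longrightarrow> j = x \<or> j = y \<or> j = z"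
  using three[of x y z] by blast

theorem lemma2p1:
  fixes M :: board and j :: nat
  assumes "modular_magic M"
    and "j \<in> {0, 3, 6}"
  shows "\<exists>p \<in> {(a,b). a < 3 \<and> b < 3 \<and> center M a b = j}.
         \<exists>q \<in> {(a,b). a < 3 \<and> b < 3 \<and> center M a b = j}.
           p \<noteq> q \<and> off_diag M (fst p) (snd p) = off_diag M (fst q) (snd q)"
proof -
  have su: "sudoku M" using assms(1) unfolding modular_magic_def by blast
  have rne: "M x c1 \<noteq> M x c2" if "x < 9" "c1 < 9" "c2 < 9" "c1 \<noteq> c2" for x c1 c2
  proof -
    have "inj_on (\<lambda>c. M x c) {..<9}" using su that(1) unfolding sudoku_def bij_betw_def by blast
    then show ?thesis using that unfolding inj_on_def by blast
  qed
  have cne: "M r1 y \<noteq> M r2 y" if "y < 9" "r1 < 9" "r2 < 9" "r1 \<noteq> r2" for y r1 r2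
  proof -
    have "inj_on (\<lambda>r. M r y) {..<9}" using su that(1) unfolding sudoku_def bij_betw_def by blast
    then show ?thesis using that unfolding inj_on_def by blast
  qed
  note BF = bf[OF assms(1)]
  define T where "T r s = tidx (center M r s) (blk M r s 1 0)" for r s
  define U where "U r s = tidx (center M r s) (blk M r s 0 1)" for r s
  define K where "K r s = tidx (center M r s) (yv M r s)" for r s
  have TT: "T r s = T r s'" if rs: "r < 3" "s < 3" "s' < 3" for r s s'
  proof (cases "s = s'")
    case True thus ?thesis by simp
  next
    case False
    note b1 = BF[OF rs(1) rs(2)] and b2 = BF[OF rs(1) rs(3)]
    note c1 = b1(1) and c2 = b2(1) and x1 = b1(4) b1(2) and x2 = b2(4) b2(2)
    note e1 = b1(6)[symmetric] and e2 = b2(6)[symmetric]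
    have n1: "center M r s \<noteq> center M r s'" unfolding center_def blk_def
      by (rule rne) (use rs False in arith)+
    have n2: "blk M r s 1 0 \<noteq> blk M r s' 1 0" unfolding blk_def
      by (rule rne) (use rs False in arith)+
    have n3: "blk M r s 1 0 \<noteq> blk M r s' 1 2" unfolding blk_def
      by (rule rne) (use rs False in arith)+
    have n4: "blk M r s 1 2 \<noteq> blk M r s' 1 0" unfolding blk_def
      by (rule rne) (use rs False in arith)+
    have n5: "blk M r s 1 2 \<noteq> blk M r s' 1 2" unfolding blk_def
      by (rule rne) (use rs False in arith)+
    show ?thesis unfolding T_def
      by (rule F2[OF c1 c2 n1 x1(1) x2(1) x1(2) x2(2) n2]) (simp_all only: e1 e2 n3 n4 n5 not_False_eq_True)
  qed
  have UU: "U r s = U r' s" if rs: "r < 3" "r' < 3" "s < 3" for r r' s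
  proof (cases "r = r'")
    case True thus ?thesis by simp
  next
    case False
    note b1 = BF[OF rs(1) rs(3)] and b2 = BF[OF rs(2) rs(3)]
    note c1 = b1(1) and c2 = b2(1) and x1 = b1(5) b1(3) and x2 = b2(5) b2(3)
    note e1 = b1(7)[symmetric] and e2 = b2(7)[symmetric]
    have n1: "center M r s \<noteq> center M r' s" unfolding center_def blk_def
      by (rule cne) (use rs False in arith)+
    have n2: "blk M r s 0 1 \<noteq> blk M r' s 0 1" unfolding blk_def
      by (rule cne) (use rs False in arith)+
    have n3: "blk M r s 0 1 \<noteq> blk M r' s 2 1" unfolding blk_def
      by (rule cne) (use rs False in arith)+
    have n4: "blk M r s 2 1 \<noteq> blk M r' s 0 1" unfolding blk_def
      by (rule cne) (use rs False in arith)+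
    have n5: "blk M r s 2 1 \<noteq> blk M r' s 2 1" unfolding blk_def
      by (rule cne) (use rs False in arith)+
    show ?thesis unfolding U_def
      by (rule F2[OF c1 c2 n1 x1(1) x2(1) x1(2) x2(2) n2]) (simp_all only: e1 e2 n3 n4 n5 not_False_eq_True)
  qed
  have TU: "T r s \<noteq> U r s" "K r s \<noteq> T r s" "K r s \<noteq> U r s"
    "T r s \<in> {1,2,3}" "U r s \<in> {1,2,3}" "K r s \<in> {1,2,3}" if "r < 3" "s < 3" for r s
    unfolding T_def U_def K_def
    apply (rule BF(11)[OF that])
    apply (rule BF(12)[OF that])
    apply (rule BF(13)[OF that])
    apply (rule BF(14)[OF that])
    apply (rule BF(15)[OF that])
    apply (rule BF(16)[OF that])
    done
  have ex: "\<exists>s. s < 3 \<and> center M r s = j" if r: "r < 3" for r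
  proof -
    have c: "center M r 0 \<in> {0,3,6}" "center M r 1 \<in> {0,3,6}" "center M r 2 \<in> {0,3,6}"
      using BF(1)[OF r, of 0] BF(1)[OF r, of 1] BF(1)[OF r, of 2] by simp_all
    have n: "center M r 0 \<noteq> center M r 1" "center M r 0 \<noteq> center M r 2" "center M r 1 \<noteq> center M r 2"
      unfolding center_def blk_def by (rule rne; use r in arith)+
    from pick3[OF c n assms(2)] show ?thesis
    proof (elim disjE)
      assume "j = center M r 0" thus ?thesis by (intro exI[of _ 0]) simp
    next
      assume "j = center M r 1" thus ?thesis by (intro exI[of _ 1]) simp
    next
      assume "j = center M r 2" thus ?thesis by (intro exI[of _ 2]) simp
    qed
  qed
  then have "\<forall>r. \<exists>s. r < 3 \<longrightarrow> s < 3 \<and> center M r s = j" by blast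
  then obtain \<sigma> where sg: "\<And>r. r < 3 \<Longrightarrow> \<sigma> r < 3 \<and> center M r (\<sigma> r) = j" by metis
  have sl: "\<sigma> r < 3" and sc: "center M r (\<sigma> r) = j" if "r < 3" for r using sg[OF that] by blast+
  have sinj: "\<sigma> r \<noteq> \<sigma> r'" if "r < 3" "r' < 3" "r \<noteq> r'" for r r'
  proof
    assume eq: "\<sigma> r = \<sigma> r'"
    have "center M r (\<sigma> r) \<noteq> center M r' (\<sigma> r)" unfolding center_def blk_def
      by (rule cne) (use that sl[OF that(1)] in arith)+
    then show False using sc[OF that(1)] sc[OF that(2)] eq by simp
  qed
  have tv: "T r (\<sigma> r) \<noteq> U r' (\<sigma> r')" if "r < 3" "r' < 3" for r r'
  proof -
    have "T r (\<sigma> r) = T r (\<sigma> r')" by (rule TT) (use that sl in auto)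
    moreover have "U r' (\<sigma> r') = U r (\<sigma> r')" by (rule UU) (use that sl in auto)
    ultimately show ?thesis using TU(1)[OF that(1) sl[OF that(2)]] by simp
  qed
  have h3: "(0::nat) < 3" "(1::nat) < 3" "(2::nat) < 3" by simp_all
  have kk: "K 0 (\<sigma> 0) = K 1 (\<sigma> 1) \<or> K 0 (\<sigma> 0) = K 2 (\<sigma> 2) \<or> K 1 (\<sigma> 1) = K 2 (\<sigma> 2)"
    by (rule PH[OF TU(4)[OF h3(1) sl[OF h3(1)]] TU(4)[OF h3(2) sl[OF h3(2)]] TU(4)[OF h3(3) sl[OF h3(3)]]
       TU(5)[OF h3(1) sl[OF h3(1)]] TU(5)[OF h3(2) sl[OF h3(2)]] TU(5)[OF h3(3) sl[OF h3(3)]]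
       TU(6)[OF h3(1) sl[OF h3(1)]] TU(6)[OF h3(2) sl[OF h3(2)]] TU(6)[OF h3(3) sl[OF h3(3)]]
       tv[OF h3(1) h3(1)] tv[OF h3(1) h3(2)] tv[OF h3(1) h3(3)]
       tv[OF h3(2) h3(1)] tv[OF h3(2) h3(2)] tv[OF h3(2) h3(3)]
       tv[OF h3(3) h3(1)] tv[OF h3(3) h3(2)] tv[OF h3(3) h3(3)]
       TU(2)[OF h3(1) sl[OF h3(1)]] TU(3)[OF h3(1) sl[OF h3(1)]]
       TU(2)[OF h3(2) sl[OF h3(2)]] TU(3)[OF h3(2) sl[OF h3(2)]]
       TU(2)[OF h3(3) sl[OF h3(3)]] TU(3)[OF h3(3) sl[OF h3(3)]]])
  have fin: "\<exists>p \<in> {(a,b). a < 3 \<and> b < 3 \<and> center M a b = j}.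
         \<exists>q \<in> {(a,b). a < 3 \<and> b < 3 \<and> center M a b = j}.
           p \<noteq> q \<and> off_diag M (fst p) (snd p) = off_diag M (fst q) (snd q)"
    if r: "r < 3" "r' < 3" "r \<noteq> r'" and k: "K r (\<sigma> r) = K r' (\<sigma> r')" for r r'
  proof -
    note b1 = BF[OF r(1) sl[OF r(1)]] and b2 = BF[OF r(2) sl[OF r(2)]]
    have o1: "off_diag M r (\<sigma> r) = {yv M r (\<sigma> r), pt j (yv M r (\<sigma> r))}" using b1(8) unfolding sc[OF r(1)] .
    have o2: "off_diag M r' (\<sigma> r') = {yv M r' (\<sigma> r'), pt j (yv M r' (\<sigma> r'))}" using b2(8) unfolding sc[OF r(2)] .
    note y1 = b1(10) b1(9) and y2 = b2(10) b2(9)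
    have ti: "tidx j (yv M r (\<sigma> r)) = tidx j (yv M r' (\<sigma> r'))"
      using k unfolding K_def sc[OF r(1)] sc[OF r(2)] .
    have oe: "off_diag M r (\<sigma> r) = off_diag M r' (\<sigma> r')"
      unfolding o1 o2 by (rule F3[OF assms(2) y1(1) y2(1) y1(2) y2(2) ti])
    have m1: "(r, \<sigma> r) \<in> {(a,b). a < 3 \<and> b < 3 \<and> center M a b = j}"
      using r(1) sl[OF r(1)] sc[OF r(1)] by simp
    have m2: "(r', \<sigma> r') \<in> {(a,b). a < 3 \<and> b < 3 \<and> center M a b = j}"
      using r(2) sl[OF r(2)] sc[OF r(2)] by simp
    have ne: "(r, \<sigma> r) \<noteq> (r', \<sigma> r')" using r(3) by simp
    show ?thesis
      apply (rule bexI[OF _ m1])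
      apply (rule bexI[OF _ m2])
      using ne oe by (simp only: fst_conv snd_conv simp_thms)
  qed
  from kk show ?thesis
  proof (elim disjE)
    assume "K 0 (\<sigma> 0) = K 1 (\<sigma> 1)" then show ?thesis by (rule fin[rotated 3]) simp_all
  next
    assume "K 0 (\<sigma> 0) = K 2 (\<sigma> 2)" then show ?thesis by (rule fin[rotated 3]) simp_all
  next
    assume "K 1 (\<sigma> 1) = K 2 (\<sigma> 2)" then show ?thesis by (rule fin[rotated 3]) simp_all
  qed
qed

end
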